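(* For all $\rho,\omega\in\mathcal{S}(\mathbb{C}^2)$ one has $D_z^2(\rho,\omega)\le 2-2(\mathbf{b}_\rho)_3(\mathbf{b}_\omega)_3\le 4$. Moreover, $D_z(\rho,\omega)=2$ holds if and only if $\{\rho,\omega\}=\{\tfrac12(I+\sigma_z),\tfrac12(I-\sigma_z)\}$. In particular the diameter of $\mathcal{S}(\mathbb{C}^2)$ with respect to $D_z$ equals $2$.
   Context: Let $\mathcal{H}=\mathbb{C}^2$, $\mathcal{H}^*$ its dual space, and $\mathcal{S}(\mathcal{H})$ the set of density operators on $\mathcal{H}$. For a linear operator $A$ on $\mathcal{H}$, its transpose $A^T$ is the operator on $\mathcal{H}^*$ defined by $(A^T\varphi)(x)=\varphi(Ax)$. $\mathcal{C}(\rho,\omega)=\{\Pi\in\mathcal{S}(\mathcal{H}\otimes\mathcal{H}^* ):\ \mathrm{tr}_{\mathcal{H}^*}[\Pi]=\omega,\ \mathrm{tr}_{\mathcal{H}}[\Pi]=\rho^T\}$. The Pauli matrices are $\sigma_1=\begin{bmatrix}0&1\\1&0\end{bmatrix}$, $\sigma_2=\begin{bmatrix}0&-i\\i&0\end{bmatrix}$, $\sigma_3=\sigma_z=\begin{bmatrix}1&0\\0&-1\end{bmatrix}$. $C_z=(\sigma_z\otimes I^T-I\otimes\sigma_z^T)^2$ and $D_z^2(\rho,\omega)=\inf\{\mathrm{tr}[\Pi C_z]:\Pi\in\mathcal{C}(\rho,\omega)\}$. The Bloch vector of $\rho$ is $\mathbf{b}_\rho=(\mathrm{tr}[\sigma_j\rho])_{j=1}^3$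 and $(\mathbf{b}_\rho)_3$ is its third coordinate. *)

theory Defs
  imports Complex_Main "Jordan_Normal_Form.Matrix"
begin

text \<open>Operators on H = C^2 are complex 2x2 matrices w.r.t. the standard basis; operators
on H^* are written w.r.t. the dual basis, so the transpose A^T is the matrix transpose.
Operators on H (x) H^* are 4x4 matrices, basis vector e_i (x) e_j^* having index 2*i+j.\<close>

definition mtrace :: "complex mat \<Rightarrow> complex" where
  "mtrace A = (\<Sum>i<dim_row A. A $$ (i, i))"

definition density :: "nat \<Rightarrow> complex mat \<Rightarrow> bool" where
  "density n A \<longleftrightarrow> A \<in> carrier_mat n n \<and> mtrace A = 1 \<and>
     (\<forall>v \<in> carrier_vec n. Im (conjugate v \<bullet> (A *\<^sub>v v)) = 0 \<and> Re (conjugate v \<bullet> (A *\<^sub>v v)) \<ge> 0)"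

definition kron2 :: "complex mat \<Rightarrow> complex mat \<Rightarrow> complex mat" where
  "kron2 A B = mat 4 4 (\<lambda>(r, c). A $$ (r div 2, c div 2) * B $$ (r mod 2, c mod 2))"

definition ptrace_dual :: "complex mat \<Rightarrow> complex mat" where
  "ptrace_dual P = mat 2 2 (\<lambda>(i, j). \<Sum>k<2. P $$ (2*i + k, 2*j + k))"

definition ptrace_H :: "complex mat \<Rightarrow> complex mat" where
  "ptrace_H P = mat 2 2 (\<lambda>(i, j). \<Sum>k<2. P $$ (2*k + i, 2*k + j))"

definition couplings :: "complex mat \<Rightarrow> complex mat \<Rightarrow> complex mat set" where
  "couplings \<rho> \<omega> = {P. density 4 P \<and> ptrace_dual P = \<omega> \<and> ptrace_H P = transpose_mat \<rho>}"

definition sigma_z :: "complex mat" where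
  "sigma_z = mat_of_rows_list 2 [[1, 0], [0, -1]]"

definition C_z :: "complex mat" where
  "C_z = (let M = kron2 sigma_z (1\<^sub>m 2) - kron2 (1\<^sub>m 2) (transpose_mat sigma_z) in M * M)"

definition Dz_sq :: "complex mat \<Rightarrow> complex mat \<Rightarrow> real" where
  "Dz_sq \<rho> \<omega> = Inf ((\<lambda>P. Re (mtrace (P * C_z))) ` couplings \<rho> \<omega>)"

definition Dz :: "complex mat \<Rightarrow> complex mat \<Rightarrow> real" where
  "Dz \<rho> \<omega> = sqrt (Dz_sq \<rho> \<omega>)"

definition bloch3 :: "complex mat \<Rightarrow> real" where
  "bloch3 \<rho> = Re (mtrace (sigma_z * \<rho>))"

end

theory Submission
  imports Defs
begin

lemma sum4: "(\<Sum>i<(4::nat). f i) = f 0 + f 1 + f 2 + (f 3::'a::comm_monoid_add)"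
  by (simp add: eval_nat_numeral add.commute add.left_commute)
lemma sum2: "(\<Sum>i<(2::nat). f i) = f 0 + (f 1::'a::comm_monoid_add)"
  by (simp add: eval_nat_numeral add.commute)
lemma sum4b: "(\<Sum>i=0..<(4::nat). f i) = f 0 + f 1 + f 2 + (f 3::'a::comm_monoid_add)"
  using sum4 atLeast0LessThan by metis
lemma sum2b: "(\<Sum>i=0..<(2::nat). f i) = f 0 + (f 1::'a::comm_monoid_add)"
  using sum2 atLeast0LessThan by metis
lemma lt4: "(i::nat) < 4 \<longleftrightarrow> i = 0 \<or> i = 1 \<or> i = 2 \<or> i = 3" by auto
lemma lt2: "(i::nat) < 2 \<longleftrightarrow> i = 0 \<or> i = 1" by auto

lemma sigma_z_carrier: "sigma_z \<in> carrier_mat 2 2"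
  by (simp add: sigma_z_def mat_of_rows_list_def numeral_2_eq_2)
lemma sigma_z_idx: "i < 2 \<Longrightarrow> j < 2 \<Longrightarrow> sigma_z $$ (i,j) = (if i = j then (if i = 0 then 1 else -1) else 0)"
  apply (simp add: sigma_z_def mat_of_rows_list_def)
  by (auto simp: less_2_cases_iff)
lemma sigma_z_T: "transpose_mat sigma_z = sigma_z"
  apply (rule eq_matI) using sigma_z_carrier by (auto simp: sigma_z_idx)


lemma kron2_idx: "r < 4 \<Longrightarrow> c < 4 \<Longrightarrow> kron2 A B $$ (r,c) = A $$ (r div 2, c div 2) * B $$ (r mod 2, c mod 2)"
  by (simp add: kron2_def)
lemma kron2_dim[simp]: "dim_row (kron2 A B) = 4" "dim_col (kron2 A B) = 4" by (simp_all add: kron2_def)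

lemma M_explicit: "kron2 sigma_z (1\<^sub>m 2) - kron2 (1\<^sub>m 2) (transpose_mat sigma_z)
   = mat 4 4 (\<lambda>(r,c). if r = c then (if r = 1 then 2 else if r = 2 then -2 else 0) else 0)"
proof (rule eq_matI)
  fix i j assume ij: "i < dim_row (mat 4 4 (\<lambda>(r,c). if r = c then (if r = 1 then 2 else if r = 2 then -2 else 0) else (0::complex)))"
     "j < dim_col (mat 4 4 (\<lambda>(r,c). if r = c then (if r = 1 then 2 else if r = 2 then -2 else 0) else (0::complex)))"
  then have "i < 4" "j < 4" by auto
  then show "(kron2 sigma_z (1\<^sub>m 2) - kron2 (1\<^sub>m 2) (transpose_mat sigma_z)) $$ (i,j) = 
     mat 4 4 (\<lambda>(r,c). if r = c then (if r = 1 then 2 else if r = 2 then -2 else 0) else 0) $$ (i,j)"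
    unfolding sigma_z_T lt4
    by (elim disjE; simp add: kron2_idx sigma_z_idx)
qed auto

lemma mult4_idx: "A \<in> carrier_mat 4 4 \<Longrightarrow> B \<in> carrier_mat 4 4 \<Longrightarrow> i < 4 \<Longrightarrow> j < 4 \<Longrightarrow>
   (A * B) $$ (i,j) = A $$ (i,0) * B $$ (0,j) + A $$ (i,1) * B $$ (1,j) + A $$ (i,2) * B $$ (2,j) + A $$ (i,3) * B $$ (3,j)"
  by (simp add: scalar_prod_def sum4b)

lemma C_z_explicit: "C_z = mat 4 4 (\<lambda>(r,c). if r = c \<and> (r = 1 \<or> r = 2) then 4 else 0)"
proof (rule eq_matI)
  fix i j assume ij: "i < dim_row (mat 4 4 (\<lambda>(r,c). if r = c \<and> (r = 1 \<or> r = 2) then 4 else (0::complex)))"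
     "j < dim_col (mat 4 4 (\<lambda>(r,c). if r = c \<and> (r = 1 \<or> r = 2) then 4 else (0::complex)))"
  then have "i < 4" "j < 4" by auto
  then show "C_z $$ (i,j) = mat 4 4 (\<lambda>(r,c). if r = c \<and> (r = 1 \<or> r = 2) then 4 else 0) $$ (i,j)"
    unfolding C_z_def Let_def M_explicit lt4
    by (elim disjE; simp del: index_mult_mat add: mult4_idx)
qed (auto simp: C_z_def Let_def M_explicit)

lemma cost_explicit: "P \<in> carrier_mat 4 4 \<Longrightarrow> mtrace (P * C_z) = 4 * (P $$ (1,1) + P $$ (2,2))"
proof -
  assume P: "P \<in> carrier_mat 4 4"
  have "dim_row (P * C_z) = 4" using P by simp
  then show ?thesis unfolding mtrace_def C_z_explicit using P
    by (simp del: index_mult_mat add: sum4 mult4_idx)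
qed

lemma form2: "A \<in> carrier_mat 2 2 \<Longrightarrow> conjugate (vec 2 f) \<bullet> (A *\<^sub>v vec 2 f) =
   cnj (f 0) * (A $$ (0,0) * f 0 + A $$ (0,1) * f 1) + cnj (f 1) * (A $$ (1,0) * f 0 + A $$ (1,1) * f 1)"
  by (simp add: scalar_prod_def sum2b)

lemma density2_form: assumes "density 2 A"
  shows "Im (cnj x * (A $$ (0,0) * x + A $$ (0,1) * y) + cnj y * (A $$ (1,0) * x + A $$ (1,1) * y)) = 0 \<and>
         Re (cnj x * (A $$ (0,0) * x + A $$ (0,1) * y) + cnj y * (A $$ (1,0) * x + A $$ (1,1) * y)) \<ge> 0"
proof -
  have A: "A \<in> carrier_mat 2 2" using assms by (simp add: density_def)
  have "vec 2 (\<lambda>i. if i = 0 then x else y) \<in> carrier_vec 2" by simp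
  then have "Im (conjugate (vec 2 (\<lambda>i. if i = 0 then x else y)) \<bullet> (A *\<^sub>v vec 2 (\<lambda>i. if i = 0 then x else y))) = 0 \<and>
     Re (conjugate (vec 2 (\<lambda>i. if i = 0 then x else y)) \<bullet> (A *\<^sub>v vec 2 (\<lambda>i. if i = 0 then x else y))) \<ge> 0"
    using assms unfolding density_def by blast
  then show ?thesis unfolding form2[OF A] by simp
qed

lemma density2_facts: assumes "density 2 A"
  shows "Im (A $$ (0,0)) = 0" "Re (A $$ (0,0)) \<ge> 0" "Im (A $$ (1,1)) = 0" "Re (A $$ (1,1)) \<ge> 0"
    "A $$ (1,0) = cnj (A $$ (0,1))" "Re (A $$ (0,0)) + Re (A $$ (1,1)) = 1"
proof -
  note F = density2_form[OF assms]
  show "Im (A $$ (0,0)) = 0" "Re (A $$ (0,0)) \<ge> 0" using F[of 1 0] by simp_all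
  show "Im (A $$ (1,1)) = 0" "Re (A $$ (1,1)) \<ge> 0" using F[of 0 1] by simp_all
  have "mtrace A = 1" using assms by (simp add: density_def)
  moreover have "dim_row A = 2" using assms by (auto simp: density_def)
  ultimately show "Re (A $$ (0,0)) + Re (A $$ (1,1)) = 1" by (simp add: mtrace_def sum2 complex_eq_iff)
  have 1: "Im (A $$ (0,1)) + Im (A $$ (1,0)) = 0" using F[of 1 1] F[of 1 0] F[of 0 1] by simp
  have 2: "Re (A $$ (0,1)) - Re (A $$ (1,0)) = 0" using F[of 1 \<i>] F[of 1 0] F[of 0 1] by simp
  show "A $$ (1,0) = cnj (A $$ (0,1))" using 1 2 by (simp add: complex_eq_iff)
qed

lemma density2_bnd: assumes "density 2 A"
  shows "(cmod (A $$ (0,1)))^2 \<le> Re (A $$ (0,0)) * Re (A $$ (1,1))"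
proof -
  note F = density2_form[OF assms]
  note D = density2_facts[OF assms]
  define a where "a = Re (A $$ (0,0))"
  define d where "d = Re (A $$ (1,1))"
  define b where "b = A $$ (0,1)"
  have e: "A $$ (0,0) = of_real a" "A $$ (1,1) = of_real d" "A $$ (1,0) = cnj b"
    using D by (auto simp: a_def d_def b_def complex_eq_iff)
  have bb: "cnj b * b = of_real ((cmod b)^2)" by (metis complex_norm_square mult.commute)
  show ?thesis
  proof (cases "a > 0")
    case True
    have "Re (cnj (-b) * (of_real a * (-b) + b * of_real a) + cnj (of_real a) * (cnj b * (-b) + of_real d * of_real a)) \<ge> 0"
      using F[of "-b" "of_real a"] unfolding e b_def by simp
    also have "cnj (-b) * (of_real a * (-b) + b * of_real a) + cnj (of_real a) * (cnj b * (-b) + of_real d * of_real a)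
       = of_real a * (of_real d * of_real a - cnj b * b)"
      by (simp add: algebra_simps)
    also have "\<dots> = of_real (a * (d * a - (cmod b)^2))" unfolding bb by simp
    finally have "0 \<le> a * (d * a - (cmod b)^2)" by simp
    then have "0 \<le> d * a - (cmod b)^2" using True by (simp add: zero_le_mult_iff)
    then show ?thesis by (simp add: a_def d_def b_def mult.commute)
  next
    case False
    then have a0: "a = 0" using D by (simp add: a_def)
    show ?thesis
    proof (rule ccontr)
      assume "\<not> ?thesis"
      then have pos: "(cmod b)^2 > 0" using a0 by (simp add: a_def d_def b_def)
      define s where "s = (d + 1) / (2 * (cmod b)^2)"
      have "Re (cnj (- of_real s * b) * (0 * (- of_real s * b) + b * 1) + cnj 1 * (cnj b * (- of_real s * b) + of_real d * 1)) \<ge> 0"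
        using F[of "- of_real s * b" 1] unfolding e b_def a0 by simp
      also have "cnj (- of_real s * b) * (0 * (- of_real s * b) + b * 1) + cnj 1 * (cnj b * (- of_real s * b) + of_real d * 1)
         = of_real d - 2 * of_real s * (cnj b * b)"
        by (simp add: algebra_simps)
      also have "\<dots> = of_real (d - 2 * s * (cmod b)^2)" unfolding bb by simp
      also have "d - 2 * s * (cmod b)^2 = -1" using pos by (simp add: s_def field_simps)
      finally show False by simp
    qed
  qed
qed

lemma density2_gram: assumes "density 2 A"
  shows "\<exists>X. \<forall>i<2. \<forall>j<2. A $$ (i,j) = (\<Sum>m<(2::nat). cnj (X m i) * X m j)"
proof -
  note D = density2_facts[OF assms]
  note B = density2_bnd[OF assms]
  define a where "a = Re (A $$ (0,0))"
  define d where "d = Re (A $$ (1,1))"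
  define b where "b = A $$ (0,1)"
  have e: "A $$ (0,0) = of_real a" "A $$ (1,1) = of_real d" "A $$ (1,0) = cnj b" "A $$ (0,1) = b"
    using D by (auto simp: a_def d_def b_def complex_eq_iff)
  have bb: "cnj b * b = of_real ((cmod b)^2)" by (metis complex_norm_square mult.commute)
  have bnd: "(cmod b)^2 \<le> a * d" using B by (simp add: a_def d_def b_def)
  have a0: "a \<ge> 0" "d \<ge> 0" using D by (auto simp: a_def d_def)
  show ?thesis
  proof (cases "a > 0")
    case True
    define r where "r = sqrt a"
    define t where "t = sqrt (d - (cmod b)^2 / a)"
    have r: "r * r = a" "r > 0" using True by (auto simp: r_def)
    have "(cmod b)^2 / a \<le> d" using bnd True by (simp add: divide_le_eq mult.commute)
    then have t: "t * t = d - (cmod b)^2 / a" by (simp add: t_def)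
    define X where "X = (\<lambda>m j. if m = (0::nat) then (if j = (0::nat) then complex_of_real r else b / of_real r)
                          else (if j = 0 then 0 else complex_of_real t))"
    have "A $$ (0,0) = (\<Sum>m<2. cnj (X m 0) * X m 0)"
      unfolding e sum2 X_def by (simp flip: of_real_mult add: r)
    moreover have "A $$ (0,1) = (\<Sum>m<2. cnj (X m 0) * X m 1)"
      unfolding e sum2 X_def using r by simp
    moreover have "A $$ (1,0) = (\<Sum>m<2. cnj (X m 1) * X m 0)"
      unfolding e sum2 X_def using r by simp
    moreover have "A $$ (1,1) = (\<Sum>m<2. cnj (X m 1) * X m 1)"
    proof -
      have "(\<Sum>m<2. cnj (X m 1) * X m 1) = cnj b * b / (of_real r * of_real r) + of_real t * of_real t"
        unfolding sum2 X_def by simp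
      also have "\<dots> = of_real ((cmod b)^2 / a + t * t)" unfolding bb r(1)[symmetric] by simp
      also have "\<dots> = A $$ (1,1)" unfolding e t by simp
      finally show ?thesis by simp
    qed
    ultimately show ?thesis by (intro exI[of _ X]) (auto simp: lt2)
  next
    case False
    then have "a = 0" using a0 by simp
    then have b0: "b = 0" using bnd by simp
    define X where "X = (\<lambda>m j. if m = (1::nat) \<and> j = (1::nat) then complex_of_real (sqrt d) else 0)"
    have "A $$ (1,1) = (\<Sum>m<2. cnj (X m 1) * X m 1)"
      unfolding e sum2 X_def using a0 by (simp flip: of_real_mult)
    moreover have "A $$ (0,0) = (\<Sum>m<2. cnj (X m 0) * X m 0)" "A $$ (0,1) = (\<Sum>m<2. cnj (X m 0) * X m 1)"
      "A $$ (1,0) = (\<Sum>m<2. cnj (X m 1) * X m 0)"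
      unfolding e sum2 X_def using \<open>a = 0\<close> b0 by simp_all
    ultimately show ?thesis by (intro exI[of _ X]) (auto simp: lt2)
  qed
qed

lemma gram_identity:
  fixes V :: "nat \<Rightarrow> nat \<Rightarrow> complex" and X Z :: "nat \<Rightarrow> nat \<Rightarrow> complex"
  shows "(\<Sum>r<(4::nat). cnj (V (r div 2) (r mod 2)) * (\<Sum>c<(4::nat). ((\<Sum>m<(2::nat). cnj (X m (r div 2)) * X m (c div 2)) *
              (\<Sum>m<(2::nat). cnj (Z m (r mod 2)) * Z m (c mod 2))) * V (c div 2) (c mod 2)))
     = (\<Sum>i<(2::nat). \<Sum>k<(2::nat). cnj (\<Sum>j<(2::nat). \<Sum>l<(2::nat). X i j * Z k l * V j l) *
                       (\<Sum>j<(2::nat). \<Sum>l<(2::nat). X i j * Z k l * V j l))"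
  by (simp add: sum4 sum2 algebra_simps)

lemma form4: "P \<in> carrier_mat 4 4 \<Longrightarrow> v \<in> carrier_vec 4 \<Longrightarrow> conjugate v \<bullet> (P *\<^sub>v v) =
   (\<Sum>r<(4::nat). cnj (v $ r) * (\<Sum>c<(4::nat). P $$ (r,c) * v $ c))"
  by (simp add: scalar_prod_def atLeast0LessThan)

lemma cnj_self: "cnj z * z = (complex_of_real (cmod z))^2"
  by (metis complex_norm_square mult.commute of_real_power)

lemma sum_cnj_self: "(\<Sum>i<(2::nat). \<Sum>k<(2::nat). cnj (w i k) * w i k) = complex_of_real (\<Sum>i<(2::nat). \<Sum>k<(2::nat). (cmod (w i k))^2)"
  by (simp add: sum2 cnj_self)

lemma kron_density: assumes A: "density 2 A" and B: "density 2 B"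
  shows "density 4 (kron2 A (transpose_mat B))"
proof -
  have Ac: "A \<in> carrier_mat 2 2" and Bc: "B \<in> carrier_mat 2 2" using A B by (auto simp: density_def)
  have Pc: "kron2 A (transpose_mat B) \<in> carrier_mat 4 4" by (simp add: kron2_def)
  have PI: "kron2 A (transpose_mat B) $$ (r,c) = A $$ (r div 2, c div 2) * B $$ (c mod 2, r mod 2)"
    if "r < 4" "c < 4" for r c using that Bc by (simp add: kron2_idx)
  have tA: "A $$ (0,0) + A $$ (1,1) = 1" using A by (auto simp: density_def mtrace_def sum2)
  have tB: "B $$ (0,0) + B $$ (1,1) = 1" using B by (auto simp: density_def mtrace_def sum2)
  have tr: "mtrace (kron2 A (transpose_mat B)) = 1"
  proof -
    have "mtrace (kron2 A (transpose_mat B)) = (A $$ (0,0) + A $$ (1,1)) * (B $$ (0,0) + B $$ (1,1))"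
      unfolding mtrace_def by (simp add: sum4 PI algebra_simps)
    then show ?thesis using tA tB by simp
  qed
  obtain X where X: "\<forall>i<2. \<forall>j<2. A $$ (i,j) = (\<Sum>m<(2::nat). cnj (X m i) * X m j)"
    using density2_gram[OF A] by blast
  obtain Y where Y: "\<forall>i<2. \<forall>j<2. B $$ (i,j) = (\<Sum>m<(2::nat). cnj (Y m i) * Y m j)"
    using density2_gram[OF B] by blast
  define Z where "Z = (\<lambda>m j. cnj (Y m j))"
  have YZ: "B $$ (c mod 2, r mod 2) = (\<Sum>m<(2::nat). cnj (Z m (r mod 2)) * Z m (c mod 2))" for r c
    using Y by (simp add: Z_def mult.commute)
  have form: "Im (conjugate v \<bullet> (kron2 A (transpose_mat B) *\<^sub>v v)) = 0 \<and>
              Re (conjugate v \<bullet> (kron2 A (transpose_mat B) *\<^sub>v v)) \<ge> 0" if v: "v \<in> carrier_vec 4" for v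
  proof -
    define V where "V = (\<lambda>j l. v $ (2*j+l))"
    have vV: "v $ r = V (r div 2) (r mod 2)" for r by (simp add: V_def)
    define w where "w = (\<lambda>i k. \<Sum>j<(2::nat). \<Sum>l<(2::nat). X i j * Z k l * V j l)"
    have "conjugate v \<bullet> (kron2 A (transpose_mat B) *\<^sub>v v) =
       (\<Sum>r<(4::nat). cnj (V (r div 2) (r mod 2)) * (\<Sum>c<(4::nat). ((\<Sum>m<(2::nat). cnj (X m (r div 2)) * X m (c div 2)) *
              (\<Sum>m<(2::nat). cnj (Z m (r mod 2)) * Z m (c mod 2))) * V (c div 2) (c mod 2)))"
      unfolding form4[OF Pc v] vV
      by (intro sum.cong refl arg_cong2[where f="(*)"]) (simp_all add: PI YZ X)
    also have "\<dots> = (\<Sum>i<(2::nat). \<Sum>k<(2::nat). cnj (w i k) * w i k)"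
      unfolding gram_identity w_def ..
    also have "\<dots> = complex_of_real (\<Sum>i<(2::nat). \<Sum>k<(2::nat). (cmod (w i k))^2)"
      by (rule sum_cnj_self)
    finally show ?thesis by (simp add: sum_nonneg)
  qed
  show ?thesis unfolding density_def using Pc tr form by blast
qed

lemma diag4: assumes "density 4 P" "r < 4"
  shows "Im (P $$ (r,r)) = 0 \<and> Re (P $$ (r,r)) \<ge> 0"
proof -
  have Pc: "P \<in> carrier_mat 4 4" using assms by (simp add: density_def)
  define v where "v = vec 4 (\<lambda>i. if i = r then (1::complex) else 0)"
  have vc: "v \<in> carrier_vec 4" by (simp add: v_def)
  have "conjugate v \<bullet> (P *\<^sub>v v) = P $$ (r,r)"
    unfolding form4[OF Pc vc] using assms(2) unfolding lt4 v_def
    by (elim disjE; simp add: sum4)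
  then show ?thesis using assms(1) vc unfolding density_def by metis
qed

definition E0 :: "complex mat" where "E0 = mat 2 2 (\<lambda>(i,j). if i = 0 \<and> j = 0 then 1 else 0)"
definition E1 :: "complex mat" where "E1 = mat 2 2 (\<lambda>(i,j). if i = 1 \<and> j = 1 then 1 else 0)"

lemma E0_eq: "(1/2) \<cdot>\<^sub>m (1\<^sub>m 2 + sigma_z) = E0"
  apply (rule eq_matI) using sigma_z_carrier by (auto simp: E0_def sigma_z_idx lt2)
lemma E1_eq: "(1/2) \<cdot>\<^sub>m (1\<^sub>m 2 - sigma_z) = E1"
  apply (rule eq_matI) using sigma_z_carrier by (auto simp: E1_def sigma_z_idx lt2)
lemma E01_ne: "E0 \<noteq> E1"
proof
  assume "E0 = E1" then have "E0 $$ (0,0) = E1 $$ (0,0)" by simp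
  then show False by (simp add: E0_def E1_def)
qed

lemma form2v: "A \<in> carrier_mat 2 2 \<Longrightarrow> v \<in> carrier_vec 2 \<Longrightarrow> conjugate v \<bullet> (A *\<^sub>v v) =
   cnj (v$0) * (A $$ (0,0) * v$0 + A $$ (0,1) * v$1) + cnj (v$1) * (A $$ (1,0) * v$0 + A $$ (1,1) * v$1)"
  by (simp add: scalar_prod_def sum2b)

lemma E0_density: "density 2 E0"
proof -
  have c: "E0 \<in> carrier_mat 2 2" by (simp add: E0_def)
  have "conjugate v \<bullet> (E0 *\<^sub>v v) = (complex_of_real (cmod (v$0)))^2" if "v \<in> carrier_vec 2" for v
    unfolding form2v[OF c that] by (simp add: E0_def cnj_self)
  then show ?thesis unfolding density_def using c by (auto simp: mtrace_def E0_def sum2 simp del: of_real_power)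
qed
lemma E1_density: "density 2 E1"
proof -
  have c: "E1 \<in> carrier_mat 2 2" by (simp add: E1_def)
  have "conjugate v \<bullet> (E1 *\<^sub>v v) = (complex_of_real (cmod (v$1)))^2" if "v \<in> carrier_vec 2" for v
    unfolding form2v[OF c that] by (simp add: E1_def cnj_self)
  then show ?thesis unfolding density_def using c by (auto simp: mtrace_def E1_def sum2 simp del: of_real_power)
qed

lemma bloch3_eq: "density 2 A \<Longrightarrow> bloch3 A = Re (A $$ (0,0)) - Re (A $$ (1,1))"
  unfolding bloch3_def mtrace_def using sigma_z_carrier
  by (auto simp: density_def sum2 sigma_z_idx scalar_prod_def sum2b)

lemma ptrace_entries: assumes "P \<in> couplings \<rho> \<omega>"
  shows "\<omega> $$ (0,0) = P $$ (0,0) + P $$ (1,1)" "\<omega> $$ (1,1) = P $$ (2,2) + P $$ (3,3)"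
    "\<rho> $$ (0,0) = P $$ (0,0) + P $$ (2,2)" "\<rho> $$ (1,1) = P $$ (1,1) + P $$ (3,3)"
proof -
  have e1: "ptrace_dual P = \<omega>" and e2: "ptrace_H P = transpose_mat \<rho>" using assms by (auto simp: couplings_def)
  have "dim_row (ptrace_H P) = 2" "dim_col (ptrace_H P) = 2" by (simp_all add: ptrace_H_def)
  then have d: "dim_row \<rho> = 2" "dim_col \<rho> = 2" using e2 by (metis index_transpose_mat(2,3))+
  show "\<omega> $$ (0,0) = P $$ (0,0) + P $$ (1,1)" "\<omega> $$ (1,1) = P $$ (2,2) + P $$ (3,3)"
    unfolding e1[symmetric] by (simp_all add: ptrace_dual_def sum2)
  have "\<rho> $$ (0,0) = ptrace_H P $$ (0,0)" "\<rho> $$ (1,1) = ptrace_H P $$ (1,1)" unfolding e2 using d by simp_all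
  then show "\<rho> $$ (0,0) = P $$ (0,0) + P $$ (2,2)" "\<rho> $$ (1,1) = P $$ (1,1) + P $$ (3,3)"
    by (simp_all add: ptrace_H_def sum2 eval_nat_numeral)
qed

lemma cost_couplings: assumes "P \<in> couplings \<rho> \<omega>"
  shows "Re (mtrace (P * C_z)) = 4 * (Re (P $$ (1,1)) + Re (P $$ (2,2)))"
  using assms cost_explicit by (auto simp: couplings_def density_def)

lemma prod_coupling: assumes "density 2 \<rho>" "density 2 \<omega>"
  shows "kron2 \<omega> (transpose_mat \<rho>) \<in> couplings \<rho> \<omega>"
proof -
  have rc: "\<rho> \<in> carrier_mat 2 2" and wc: "\<omega> \<in> carrier_mat 2 2" using assms by (auto simp: density_def)
  have tr: "\<rho> $$ (0,0) + \<rho> $$ (1,1) = 1" "\<omega> $$ (0,0) + \<omega> $$ (1,1) = 1"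
    using assms by (auto simp: density_def mtrace_def sum2)
  have "ptrace_dual (kron2 \<omega> (transpose_mat \<rho>)) = \<omega>"
  proof (rule eq_matI)
    fix i j assume "i < dim_row \<omega>" "j < dim_col \<omega>"
    then have ij: "i < 2" "j < 2" using wc by auto
    have "ptrace_dual (kron2 \<omega> (transpose_mat \<rho>)) $$ (i,j) = \<omega> $$ (i,j) * (\<rho> $$ (0,0) + \<rho> $$ (1,1))"
      using ij rc by (auto simp: lt2 ptrace_dual_def sum2 kron2_idx algebra_simps)
    then show "ptrace_dual (kron2 \<omega> (transpose_mat \<rho>)) $$ (i,j) = \<omega> $$ (i,j)" using tr by simp
  qed (use wc in \<open>auto simp: ptrace_dual_def\<close>)
  moreover have "ptrace_H (kron2 \<omega> (transpose_mat \<rho>)) = transpose_mat \<rho>"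
  proof (rule eq_matI)
    fix i j assume "i < dim_row (transpose_mat \<rho>)" "j < dim_col (transpose_mat \<rho>)"
    then have ij: "i < 2" "j < 2" using rc by auto
    have "ptrace_H (kron2 \<omega> (transpose_mat \<rho>)) $$ (i,j) = \<rho> $$ (j,i) * (\<omega> $$ (0,0) + \<omega> $$ (1,1))"
      using ij rc by (auto simp: lt2 ptrace_H_def sum2 kron2_idx algebra_simps)
    then show "ptrace_H (kron2 \<omega> (transpose_mat \<rho>)) $$ (i,j) = transpose_mat \<rho> $$ (i,j)" using tr ij rc by simp
  qed (use rc in \<open>auto simp: ptrace_H_def\<close>)
  ultimately show ?thesis unfolding couplings_def using kron_density[OF assms(2,1)] by blast
qed

lemma arith1: "abs (x::real) \<le> 1 \<Longrightarrow> abs y \<le> 1 \<Longrightarrow> x*y \<le> -1 \<Longrightarrow> (x = 1 \<and> y = -1) \<or> (x = -1 \<and> y = 1)"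
proof -
  assume a: "abs x \<le> 1" "abs y \<le> 1" "x*y \<le> -1"
  have m: "abs x * abs y \<ge> 1" using a(3) by (simp add: abs_mult[symmetric])
  have "abs x * abs y \<le> abs x" using a(2) by (simp add: mult_left_le)
  then have x: "abs x = 1" using m a(1) by linarith
  have "abs x * abs y \<le> abs y" using a(1) by (simp add: mult_left_le_one_le)
  then have y: "abs y = 1" using m a(2) by linarith
  from x y a(3) show ?thesis by (auto simp: abs_if split: if_splits)
qed
lemma arith2: "abs (x::real) \<le> 1 \<Longrightarrow> abs y \<le> 1 \<Longrightarrow> x*y \<ge> -1"
proof -
  assume a: "abs x \<le> 1" "abs y \<le> 1"
  have "abs (x*y) \<le> 1" unfolding abs_mult using a by (simp add: mult_le_one)
  then show ?thesis by linarith
qed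

lemma cost_nonneg: "P \<in> couplings \<rho> \<omega> \<Longrightarrow> Re (mtrace (P * C_z)) \<ge> 0"
  using cost_couplings[of P \<rho> \<omega>] diag4[of P 1] diag4[of P 2] by (auto simp: couplings_def)

lemma Dz_sq_bounds: assumes r: "density 2 \<rho>" and w: "density 2 \<omega>"
  shows "Dz_sq \<rho> \<omega> \<le> 2 - 2 * bloch3 \<rho> * bloch3 \<omega>" "0 \<le> Dz_sq \<rho> \<omega>"
    "2 - 2 * bloch3 \<rho> * bloch3 \<omega> \<le> 4"
proof -
  let ?S = "(\<lambda>P. Re (mtrace (P * C_z))) ` couplings \<rho> \<omega>"
  define P where "P = kron2 \<omega> (transpose_mat \<rho>)"
  have PC: "P \<in> couplings \<rho> \<omega>" unfolding P_def by (rule prod_coupling[OF r w])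
  have bdd: "bdd_below ?S" using cost_nonneg by (intro bdd_belowI[of _ 0]) auto
  have ne: "?S \<noteq> {}" using PC by auto
  note R = density2_facts[OF r] and W = density2_facts[OF w]
  have rc: "\<rho> \<in> carrier_mat 2 2" using r by (simp add: density_def)
  have "Re (mtrace (P * C_z)) = 4 * (Re (P $$ (1,1)) + Re (P $$ (2,2)))" by (rule cost_couplings[OF PC])
  also have "P $$ (1,1) = \<omega> $$ (0,0) * \<rho> $$ (1,1)" unfolding P_def using rc by (simp add: kron2_idx)
  also have "P $$ (2,2) = \<omega> $$ (1,1) * \<rho> $$ (0,0)" unfolding P_def using rc by (simp add: kron2_idx)
  finally have cP: "Re (mtrace (P * C_z)) = 4 * (Re (\<omega> $$ (0,0)) * Re (\<rho> $$ (1,1)) + Re (\<omega> $$ (1,1)) * Re (\<rho> $$ (0,0)))"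
    using R W by simp
  have b: "bloch3 \<rho> = Re (\<rho> $$ (0,0)) - Re (\<rho> $$ (1,1))" "bloch3 \<omega> = Re (\<omega> $$ (0,0)) - Re (\<omega> $$ (1,1))"
    using bloch3_eq r w by auto
  have e1: "Re (\<rho> $$ (1,1)) = 1 - Re (\<rho> $$ (0,0))" "Re (\<omega> $$ (1,1)) = 1 - Re (\<omega> $$ (0,0))" using R W by linarith+
  have "Dz_sq \<rho> \<omega> \<le> Re (mtrace (P * C_z))" unfolding Dz_sq_def using bdd PC by (intro cInf_lower) auto
  also have "\<dots> = 2 - 2 * bloch3 \<rho> * bloch3 \<omega>" unfolding cP b e1 by (simp add: algebra_simps)
  finally show "Dz_sq \<rho> \<omega> \<le> 2 - 2 * bloch3 \<rho> * bloch3 \<omega>" .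
  show "0 \<le> Dz_sq \<rho> \<omega>" unfolding Dz_sq_def using ne cost_nonneg by (intro cInf_greatest) auto
  have "abs (bloch3 \<rho>) \<le> 1" "abs (bloch3 \<omega>) \<le> 1" unfolding b using R W by auto
  then show "2 - 2 * bloch3 \<rho> * bloch3 \<omega> \<le> 4" using arith2[of "bloch3 \<rho>" "bloch3 \<omega>"] by linarith
qed

lemma pure0: assumes "density 2 A" "Re (A $$ (0,0)) = 1" shows "A = E0"
proof -
  note D = density2_facts[OF assms(1)] and B = density2_bnd[OF assms(1)]
  have c: "A \<in> carrier_mat 2 2" using assms by (simp add: density_def)
  have "Re (A $$ (1,1)) = 0" using D assms by simp
  then have "cmod (A $$ (0,1)) = 0" using B by simp
  then have z: "A $$ (0,1) = 0" "A $$ (1,0) = 0" using D by auto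
  have "A $$ (0,0) = 1" "A $$ (1,1) = 0" using D assms \<open>Re (A $$ (1,1)) = 0\<close> by (auto simp: complex_eq_iff)
  then show ?thesis using c z by (intro eq_matI) (auto simp: E0_def lt2)
qed

lemma pure1: assumes "density 2 A" "Re (A $$ (1,1)) = 1" shows "A = E1"
proof -
  note D = density2_facts[OF assms(1)] and B = density2_bnd[OF assms(1)]
  have c: "A \<in> carrier_mat 2 2" using assms by (simp add: density_def)
  have "Re (A $$ (0,0)) = 0" using D assms by simp
  then have "cmod (A $$ (0,1)) = 0" using B by simp
  then have z: "A $$ (0,1) = 0" "A $$ (1,0) = 0" using D by auto
  have "A $$ (0,0) = 0" "A $$ (1,1) = 1" using D assms \<open>Re (A $$ (0,0)) = 0\<close> by (auto simp: complex_eq_iff)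
  then show ?thesis using c z by (intro eq_matI) (auto simp: E1_def lt2)
qed

lemma Dz_E: assumes "(\<rho> = E0 \<and> \<omega> = E1) \<or> (\<rho> = E1 \<and> \<omega> = E0)"
  shows "Dz_sq \<rho> \<omega> = 4"
proof -
  have r: "density 2 \<rho>" and w: "density 2 \<omega>" using assms E0_density E1_density by auto
  have "bloch3 \<rho> * bloch3 \<omega> = -1" using assms bloch3_eq E0_density E1_density
    by (auto simp: E0_def E1_def)
  then have le: "Dz_sq \<rho> \<omega> \<le> 4" using Dz_sq_bounds(1)[OF r w] by simp
  have ne: "(\<lambda>P. Re (mtrace (P * C_z))) ` couplings \<rho> \<omega> \<noteq> {}" using prod_coupling[OF r w] by auto
  have "4 \<le> Re (mtrace (P * C_z))" if P: "P \<in> couplings \<rho> \<omega>" for P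
  proof -
    have d: "density 4 P" using P by (simp add: couplings_def)
    note p = ptrace_entries[OF P]
    have "Re (\<omega> $$ (0,0)) = Re (P $$ (0,0)) + Re (P $$ (1,1))" "Re (\<omega> $$ (1,1)) = Re (P $$ (2,2)) + Re (P $$ (3,3))"
      "Re (\<rho> $$ (0,0)) = Re (P $$ (0,0)) + Re (P $$ (2,2))" "Re (\<rho> $$ (1,1)) = Re (P $$ (1,1)) + Re (P $$ (3,3))"
      using p by simp_all
    moreover have "Re (P $$ (0,0)) \<ge> 0" "Re (P $$ (1,1)) \<ge> 0" "Re (P $$ (2,2)) \<ge> 0" "Re (P $$ (3,3)) \<ge> 0"
      using diag4[OF d, of 0] diag4[OF d, of 1] diag4[OF d, of 2] diag4[OF d, of 3] by simp_all
    moreover have "(Re (\<rho> $$ (0,0)) = 1 \<and> Re (\<omega> $$ (0,0)) = 0) \<or> (Re (\<rho> $$ (0,0)) = 0 \<and> Re (\<omega> $$ (0,0)) = 1)"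
      using assms by (auto simp: E0_def E1_def)
    ultimately have "Re (P $$ (1,1)) + Re (P $$ (2,2)) \<ge> 1" by linarith
    then show ?thesis using cost_couplings[OF P] by simp
  qed
  then have "4 \<le> Dz_sq \<rho> \<omega>" unfolding Dz_sq_def using ne by (intro cInf_greatest) auto
  then show ?thesis using le by simp
qed

lemma bloch_abs: "density 2 A \<Longrightarrow> abs (bloch3 A) \<le> 1"
  using density2_facts[of A] bloch3_eq[of A] by auto

lemma Dz_two: "Dz_sq \<rho> \<omega> = 4 \<Longrightarrow> Dz \<rho> \<omega> = 2"
  unfolding Dz_def by simp

lemma Dz_le: assumes "density 2 \<rho>" "density 2 \<omega>" shows "Dz \<rho> \<omega> \<le> 2"
proof -
  have "Dz_sq \<rho> \<omega> \<le> 4" using Dz_sq_bounds[OF assms] by linarith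
  then have "sqrt (Dz_sq \<rho> \<omega>) \<le> sqrt 4" by (rule real_sqrt_le_mono)
  then show ?thesis by (simp add: Dz_def)
qed

lemma Dz_char: assumes r: "density 2 \<rho>" and w: "density 2 \<omega>"
  shows "Dz \<rho> \<omega> = 2 \<longleftrightarrow> {\<rho>, \<omega>} = {E0, E1}"
proof
  assume "Dz \<rho> \<omega> = 2"
  then have s: "sqrt (Dz_sq \<rho> \<omega>) = 2" by (simp add: Dz_def)
  have "Dz_sq \<rho> \<omega> = (sqrt (Dz_sq \<rho> \<omega>))^2" using Dz_sq_bounds(2)[OF r w] by simp
  then have "Dz_sq \<rho> \<omega> = 4" using s by simp
  then have "bloch3 \<rho> * bloch3 \<omega> \<le> -1" using Dz_sq_bounds(1)[OF r w] by linarith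
  then have c: "(bloch3 \<rho> = 1 \<and> bloch3 \<omega> = -1) \<or> (bloch3 \<rho> = -1 \<and> bloch3 \<omega> = 1)"
    using arith1 bloch_abs[OF r] bloch_abs[OF w] by blast
  note R = density2_facts[OF r] and W = density2_facts[OF w]
  show "{\<rho>, \<omega>} = {E0, E1}"
  proof (cases "bloch3 \<rho> = 1")
    case True
    then have "bloch3 \<omega> = -1" using c by auto
    then have "\<rho> = E0" "\<omega> = E1" using True bloch3_eq[OF r] bloch3_eq[OF w] R W
      by (auto intro!: pure0[OF r] pure1[OF w])
    then show ?thesis by simp
  next
    case False
    then have "bloch3 \<rho> = -1" "bloch3 \<omega> = 1" using c by auto
    then have "\<rho> = E1" "\<omega> = E0" using bloch3_eq[OF r] bloch3_eq[OF w] R W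
      by (auto intro!: pure1[OF r] pure0[OF w])
    then show ?thesis by auto
  qed
next
  assume "{\<rho>, \<omega>} = {E0, E1}"
  then have "(\<rho> = E0 \<and> \<omega> = E1) \<or> (\<rho> = E1 \<and> \<omega> = E0)" by (auto simp: doubleton_eq_iff)
  then show "Dz \<rho> \<omega> = 2" by (intro Dz_two Dz_E)
qed

theorem mainTheorem4:
  shows "(\<forall>\<rho> \<omega>. density 2 \<rho> \<and> density 2 \<omega> \<longrightarrow>
            Dz_sq \<rho> \<omega> \<le> 2 - 2 * bloch3 \<rho> * bloch3 \<omega> \<and> 2 - 2 * bloch3 \<rho> * bloch3 \<omega> \<le> 4)
       \<and> (\<forall>\<rho> \<omega>. density 2 \<rho> \<and> density 2 \<omega> \<longrightarrow>
            (Dz \<rho> \<omega> = 2 \<longleftrightarrow>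
              {\<rho>, \<omega>} = {(1/2) \<cdot>\<^sub>m (1\<^sub>m 2 + sigma_z), (1/2) \<cdot>\<^sub>m (1\<^sub>m 2 - sigma_z)}))
       \<and> Sup {Dz \<rho> \<omega> | \<rho> \<omega>. density 2 \<rho> \<and> density 2 \<omega>} = 2"
proof (intro conjI allI impI)
  fix \<rho> \<omega> assume h: "density 2 \<rho> \<and> density 2 \<omega>"
  show "Dz_sq \<rho> \<omega> \<le> 2 - 2 * bloch3 \<rho> * bloch3 \<omega>" "2 - 2 * bloch3 \<rho> * bloch3 \<omega> \<le> 4"
    using Dz_sq_bounds h by auto
  show "Dz \<rho> \<omega> = 2 \<longleftrightarrow> {\<rho>, \<omega>} = {(1/2) \<cdot>\<^sub>m (1\<^sub>m 2 + sigma_z), (1/2) \<cdot>\<^sub>m (1\<^sub>m 2 - sigma_z)}"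
    unfolding E0_eq E1_eq using Dz_char h by auto
next
  show "Sup {Dz \<rho> \<omega> | \<rho> \<omega>. density 2 \<rho> \<and> density 2 \<omega>} = 2"
  proof (rule cSup_eq_maximum)
    have "Dz E0 E1 = 2" by (intro Dz_two Dz_E) simp
    then show "2 \<in> {Dz \<rho> \<omega> | \<rho> \<omega>. density 2 \<rho> \<and> density 2 \<omega>}"
      unfolding mem_Collect_eq using E0_density E1_density by (intro exI[of _ E0] exI[of _ E1]) auto
  next
    fix x assume "x \<in> {Dz \<rho> \<omega> | \<rho> \<omega>. density 2 \<rho> \<and> density 2 \<omega>}"
    then show "x \<le> 2" using Dz_le by blast
  qed
qed
end
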